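(* Assume the standing assumptions. Let $\bar u\in V$ be a local solution of problem (P) with radius $\rho>0$, i.e. $\Phi_0(\bar u)\le\Phi_0(u)$ for all $u\in V$ with $\|u-\bar u\|_V\le\rho$. Let $(\epsilon_k)$ be a sequence of positive numbers with $\epsilon_k\to0$, and for each $k$ let $u_k$ be a global solution of the auxiliary problem \[ \min_{u\in V}\ \Phi_{\epsilon_k}(u)+\frac12\|u-\bar u\|_{L^2(\Omega)}^2\quad\text{subject to}\quad \|u-\bar u\|_V\le\rho . \] Then $u_k\to\bar u$ strongly in $V$.
   Context: Standing assumptions: $\Omega\subset\mathbb R^d$ is a bounded Lipschitz domain; $V$ is a real Hilbert space with inner product $\langle\cdot,\cdot\rangle_V$, $V\subset L^2(\Omega)$ with compact and dense embedding; $V^*$ is its dual with pairing $\langle\cdot,\cdot\rangle_{V^*,V}$. $F:V\to\mathbb R$ is weakly lower semicontinuous, bounded below by an affine function ($F(u)\ge\langle g,u\rangle_{V^*,V}+c$ for some $g\in V^*$, $c\in\mathbb R$), and continuously Fréchet differentiable. $\alpha>0$, $\beta>0$, $p\in(0,1)$. For $\epsilon>0$, $\psi_\epsilon(t)=\frac p2\frac{t}{\epsilon^{2-p}}+(1-\frac p2)\epsilon^p$ if $t\in[0,\epsilon^2)$ and $\psi_\epsilon(t)=t^{p/2}$ if $t\ge\epsilon^2$; $\psi_0(t)=t^{p/2}$. $G_\epsilon(u):=\int_\Omega\psi_\epsilon(|u|^2)\,dx$ (so $G_0(u)=\int_\Omega|u|^p\,dx$), and $\Phi_\epsilon(u):=F(u)+\frac\alpha2\|u\|_V^2+\beta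 G_\epsilon(u)$ for $\epsilon\ge0$. Problem (P) is $\min_{u\in V}\Phi_0(u)$. *)

theory Defs
  imports "HOL-Analysis.Analysis"
begin

definition lipschitz_boundary :: "(real^'n::finite) set \<Rightarrow> bool" where
  "lipschitz_boundary \<Omega> \<longleftrightarrow>
     (\<forall>x\<in>frontier \<Omega>. \<exists>r>0. \<exists>(R :: real^'n \<Rightarrow> real^'n) i (h :: real^'n \<Rightarrow> real) (L::real).
        orthogonal_transformation R \<and> lipschitz_on L UNIV h \<and>
        (\<forall>y\<in>ball x r. y \<in> \<Omega> \<longleftrightarrow>
            (R y) $ i < h (\<chi> j. if j = i then 0 else (R y) $ j)))"

definition bounded_lipschitz_domain :: "(real^'n::finite) set \<Rightarrow> bool" where
  "bounded_lipschitz_domain \<Omega> \<longleftrightarrow>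
     open \<Omega> \<and> connected \<Omega> \<and> \<Omega> \<noteq> {} \<and> bounded \<Omega> \<and> lipschitz_boundary \<Omega>"

definition in_L2 :: "(real^'n::finite) set \<Rightarrow> (real^'n \<Rightarrow> real) \<Rightarrow> bool" where
  "in_L2 \<Omega> f \<longleftrightarrow> f \<in> borel_measurable (lebesgue_on \<Omega>) \<and>
                     integrable (lebesgue_on \<Omega>) (\<lambda>x. (f x)\<^sup>2)"

definition L2_norm :: "(real^'n::finite) set \<Rightarrow> (real^'n \<Rightarrow> real) \<Rightarrow> real" where
  "L2_norm \<Omega> f = sqrt (\<integral>x. (f x)\<^sup>2 \<partial>lebesgue_on \<Omega>)"

text \<open>V is a real Hilbert space (type 'v), embedded into L^2(Omega) by iota
  (each u in V is identified with the function iota u): the embedding is linear,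
  injective (modulo a.e. equality), continuous, compact and has dense range.\<close>
definition compact_dense_embedding ::
  "(real^'n::finite) set \<Rightarrow> ('v::{real_inner,complete_space} \<Rightarrow> (real^'n \<Rightarrow> real)) \<Rightarrow> bool" where
  "compact_dense_embedding \<Omega> \<iota> \<longleftrightarrow>
     (\<forall>u. in_L2 \<Omega> (\<iota> u)) \<and>
     (\<forall>a b u v x. \<iota> (a *\<^sub>R u + b *\<^sub>R v) x = a * \<iota> u x + b * \<iota> v x) \<and>
     (\<forall>u. (AE x in lebesgue_on \<Omega>. \<iota> u x = 0) \<longrightarrow> u = 0) \<and>
     (\<exists>C. \<forall>u. L2_norm \<Omega> (\<iota> u) \<le> C * norm u) \<and>
     (\<forall>s :: nat \<Rightarrow> 'v. bounded (range s) \<longrightarrow>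
        (\<exists>r f. strict_mono r \<and> in_L2 \<Omega> f \<and>
            (\<lambda>n. L2_norm \<Omega> (\<lambda>x. \<iota> (s (r n)) x - f x)) \<longlonglongrightarrow> 0)) \<and>
     (\<forall>f. in_L2 \<Omega> f \<longrightarrow> (\<forall>e>0. \<exists>v. L2_norm \<Omega> (\<lambda>x. \<iota> v x - f x) < e))"

definition weakly_converges :: "(nat \<Rightarrow> 'v::real_inner) \<Rightarrow> 'v \<Rightarrow> bool" where
  "weakly_converges s u \<longleftrightarrow> (\<forall>w. (\<lambda>n. inner (s n) w) \<longlonglongrightarrow> inner u w)"

definition weakly_lsc :: "('v::real_inner \<Rightarrow> real) \<Rightarrow> bool" where
  "weakly_lsc F \<longleftrightarrow>
     (\<forall>s u. weakly_converges s u \<longrightarrow> ereal (F u) \<le> liminf (\<lambda>n. ereal (F (s n))))"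

definition affine_lower_bound :: "('v::real_normed_vector \<Rightarrow> real) \<Rightarrow> bool" where
  "affine_lower_bound F \<longleftrightarrow> (\<exists>g c. bounded_linear g \<and> (\<forall>u. g u + c \<le> F u))"

definition C1_frechet :: "('v::real_normed_vector \<Rightarrow> real) \<Rightarrow> bool" where
  "C1_frechet F \<longleftrightarrow> (\<exists>F' :: 'v \<Rightarrow> ('v \<Rightarrow>\<^sub>L real).
       (\<forall>u. (F has_derivative blinfun_apply (F' u)) (at u)) \<and> continuous_on UNIV F')"

definition psi :: "real \<Rightarrow> real \<Rightarrow> real \<Rightarrow> real" where
  "psi p \<epsilon> t = (if \<epsilon> > 0 \<and> t < \<epsilon>\<^sup>2
                  then p / 2 * t / \<epsilon> powr (2 - p) + (1 - p / 2) * \<epsilon> powr p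
                  else t powr (p / 2))"

definition G :: "(real^'n::finite) set \<Rightarrow> ('v \<Rightarrow> (real^'n \<Rightarrow> real)) \<Rightarrow> real \<Rightarrow> real \<Rightarrow> 'v \<Rightarrow> real" where
  "G \<Omega> \<iota> p \<epsilon> u = (\<integral>x. psi p \<epsilon> ((\<iota> u x)\<^sup>2) \<partial>lebesgue_on \<Omega>)"

definition Phi :: "(real^'n::finite) set \<Rightarrow> ('v::real_normed_vector \<Rightarrow> (real^'n \<Rightarrow> real)) \<Rightarrow>
                   ('v \<Rightarrow> real) \<Rightarrow> real \<Rightarrow> real \<Rightarrow> real \<Rightarrow> real \<Rightarrow> 'v \<Rightarrow> real" where
  "Phi \<Omega> \<iota> F \<alpha> \<beta> p \<epsilon> u = F u + \<alpha> / 2 * (norm u)\<^sup>2 + \<beta> * G \<Omega> \<iota> p \<epsilon> u"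

end

theory Submission
  imports Defs
begin

lemma parallelogram_mid: fixes a b :: "'v::real_inner" shows "(norm (a - b))\<^sup>2 = 2*(norm a)\<^sup>2 + 2*(norm b)\<^sup>2 - 4*(norm ((1/2) *\<^sub>R a + (1/2) *\<^sub>R b))\<^sup>2"
  by (simp add: power2_norm_eq_inner inner_diff_left inner_diff_right inner_add_left inner_add_right inner_commute algebra_simps)

lemma weak_key:
  fixes q :: "'v::{real_inner,complete_space} \<Rightarrow> real" and d :: "nat \<Rightarrow> 'v"
  assumes qconv: "\<And>x y a b. a \<ge> 0 \<Longrightarrow> b \<ge> 0 \<Longrightarrow> a + b = 1 \<Longrightarrow> q (a *\<^sub>R x + b *\<^sub>R y) \<le> a * q x + b * q y"
  and qadd: "\<And>x y. q (x + y) \<le> 2 * q x + 2 * q y"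
  and qbound: "\<And>x. q x \<le> C * (norm x)\<^sup>2"
  and qzero: "\<And>x. q x \<le> 0 \<Longrightarrow> x = 0"
  and bnd: "\<And>n. norm (d n) \<le> B"
  and qlim: "(\<lambda>n. q (d n)) \<longlonglongrightarrow> 0"
  and c: "c > 0"
  shows "eventually (\<lambda>n. inner (d n) w < c) sequentially"
proof (rule ccontr)
  assume ne: "\<not> eventually (\<lambda>n. inner (d n) w < c) sequentially"
  have freq: "\<exists>n\<ge>N. c \<le> inner (d n) w" for N
    using ne unfolding eventually_sequentially by (meson not_le)
  define S where "S N = d ` {n. n \<ge> N \<and> c \<le> inner (d n) w}" for N
  define H where "H N = convex hull (S N)" for N
  have Sne: "S N \<noteq> {}" for N using freq[of N] unfolding S_def by blast
  have Hne: "H N \<noteq> {}" for N using Sne unfolding H_def by simp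
  have Hmono: "H M \<subseteq> H N" if "N \<le> M" for N M
    unfolding H_def by (rule hull_mono) (use that in \<open>auto simp: S_def\<close>)
  have Hconv: "convex (H N)" for N unfolding H_def by simp
  have Hc: "c \<le> inner y w" if "y \<in> H N" for y N
  proof -
    have "H N \<subseteq> {y. c \<le> inner w y}" unfolding H_def
      by (rule hull_minimal) (use convex_halfspace_ge[of c w] in \<open>auto simp: S_def inner_commute\<close>)
    then show ?thesis using that by (auto simp: inner_commute)
  qed
  have HB: "norm y \<le> B" if "y \<in> H N" for y N
  proof -
    have "H N \<subseteq> cball 0 B" unfolding H_def
      by (rule hull_minimal) (auto simp: S_def bnd)
    then show ?thesis using that by auto
  qed
  have Hq: "\<exists>N0. \<forall>N\<ge>N0. \<forall>y\<in>H N. q y \<le> e" if e: "e > 0" for e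
  proof -
    obtain N0 where N0: "\<forall>n\<ge>N0. q (d n) \<le> e"
      using qlim e unfolding LIMSEQ_def dist_real_def
      by (metis abs_less_iff diff_zero less_imp_le)
    have cv: "convex {y. q y \<le> e}"
    proof (rule convexI)
      fix x y and a b :: real assume "x \<in> {y. q y \<le> e}" "y \<in> {y. q y \<le> e}" "0 \<le> a" "0 \<le> b" "a + b = 1"
      then have "q (a *\<^sub>R x + b *\<^sub>R y) \<le> a * e + b * e"
        using qconv[of a b x y] by (smt (verit) mem_Collect_eq mult_left_mono)
      moreover have "a * e + b * e = e" using \<open>a+b=1\<close> by (metis distrib_right mult_1)
      ultimately show "a *\<^sub>R x + b *\<^sub>R y \<in> {y. q y \<le> e}" by simp
    qed
    have "\<forall>N\<ge>N0. \<forall>y\<in>H N. q y \<le> e"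
    proof (intro allI impI ballI)
      fix N y assume "N0 \<le> N" "y \<in> H N"
      have "H N \<subseteq> {y. q y \<le> e}" unfolding H_def
        by (rule hull_minimal) (use \<open>N0 \<le> N\<close> N0 cv in \<open>auto simp: S_def\<close>)
      then show "q y \<le> e" using \<open>y \<in> H N\<close> by auto
    qed
    then show ?thesis by blast
  qed
  define \<nu> where "\<nu> N = Inf ((\<lambda>y. (norm y)\<^sup>2) ` H N)" for N
  have bdd: "bdd_below ((\<lambda>y. (norm y)\<^sup>2) ` H N)" for N
    by (rule bdd_belowI[of _ 0]) auto
  have \<nu>le: "\<nu> N \<le> (norm y)\<^sup>2" if "y \<in> H N" for y N
    unfolding \<nu>_def using that bdd by (auto intro: cInf_lower)
  have \<nu>ex: "\<exists>y\<in>H N. (norm y)\<^sup>2 < \<nu> N + e" if "e > 0" for N e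
  proof -
    have "Inf ((\<lambda>y. (norm y)\<^sup>2) ` H N) < \<nu> N + e" using that by (simp add: \<nu>_def)
    from cInf_lessD[OF _ this] Hne[of N] show ?thesis by auto
  qed
  have \<nu>mono: "incseq \<nu>"
    unfolding incseq_def \<nu>_def
    by (intro allI impI cInf_superset_mono) (use Hne bdd in \<open>auto intro!: image_mono Hmono\<close>)
  have \<nu>bnd: "\<nu> N \<le> B\<^sup>2" for N
  proof -
    obtain y where "y \<in> H N" using Hne by blast
    then have "\<nu> N \<le> (norm y)\<^sup>2" "norm y \<le> B" using \<nu>le HB by auto
    then show ?thesis by (smt (verit) norm_ge_zero power_mono)
  qed
  obtain L where \<nu>L: "\<nu> \<longlonglongrightarrow> L" using incseq_convergent[OF \<nu>mono, of "B\<^sup>2"] \<nu>bnd by blast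
  then have \<nu>C: "Cauchy \<nu>" by (rule LIMSEQ_imp_Cauchy)
  have "\<forall>N. \<exists>z. z \<in> H N \<and> (norm z)\<^sup>2 < \<nu> N + 1 / Suc N"
  proof
    fix N
    have "(0::real) < 1 / Suc N" by simp
    from \<nu>ex[OF this, of N] show "\<exists>z. z \<in> H N \<and> (norm z)\<^sup>2 < \<nu> N + 1 / Suc N" by blast
  qed
  from choice[OF this] obtain y where y0: "\<forall>N. y N \<in> H N \<and> (norm (y N))\<^sup>2 < \<nu> N + 1 / Suc N" by blast
  then have y: "\<And>N. y N \<in> H N \<and> (norm (y N))\<^sup>2 < \<nu> N + 1 / Suc N" by blast
  have par: "(norm (y N - y M))\<^sup>2 \<le> 2 * (\<nu> M - \<nu> N) + 2 / Suc N + 2 / Suc M" if "N \<le> M" for N M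
  proof -
    have "y M \<in> H N" using y Hmono that by blast
    then have "(1/2) *\<^sub>R y N + (1/2) *\<^sub>R y M \<in> H N"
      using Hconv y by (intro convexD) auto
    then have "\<nu> N \<le> (norm ((1/2) *\<^sub>R y N + (1/2) *\<^sub>R y M))\<^sup>2" by (rule \<nu>le)
    moreover have "(norm (y N))\<^sup>2 < \<nu> N + 1 / Suc N" "(norm (y M))\<^sup>2 < \<nu> M + 1 / Suc M" using y by auto
    ultimately have "(norm (y N - y M))\<^sup>2 \<le> 2 * (\<nu> M - \<nu> N) + 2 * (1 / Suc N) + 2 * (1 / Suc M)"
      using parallelogram_mid[of "y N" "y M"] by (smt (verit))
    then show ?thesis by simp
  qed
  have yC: "Cauchy y"
  proof (rule CauchyI)
    fix e :: real assume e: "e > 0"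
    define e2 where "e2 = e\<^sup>2 / 8"
    have e2: "e2 > 0" using e by (simp add: e2_def)
    obtain M1 where M1: "\<forall>m\<ge>M1. \<forall>n\<ge>M1. norm (\<nu> m - \<nu> n) < e2"
      using \<nu>C e2 unfolding Cauchy_def dist_norm by blast
    obtain M2 where M2: "\<forall>n\<ge>M2. 2 / real (Suc n) < e2"
    proof -
      obtain M2 where M2a: "2 / e2 < real M2" using reals_Archimedean2 by blast
      have "\<forall>n\<ge>M2. 2 / real (Suc n) < e2"
      proof (intro allI impI)
        fix n assume "M2 \<le> n"
        then have m1: "e2 * real M2 \<le> e2 * real n" using e2 by (intro mult_left_mono) auto
        have m2: "2 < e2 * real M2" using M2a e2 by (simp add: divide_less_eq mult.commute)
        have m3: "e2 * real n < e2 * real (Suc n)" using e2 by simp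
        have "2 < e2 * real (Suc n)" using m1 m2 m3 by linarith
        then show "2 / real (Suc n) < e2" by (simp add: divide_less_eq mult.commute)
      qed
      then show ?thesis using that by blast
    qed
    have "\<forall>m\<ge>max M1 M2. \<forall>n\<ge>max M1 M2. norm (y m - y n) < e"
    proof (intro allI impI)
      fix m n assume mn: "max M1 M2 \<le> m" "max M1 M2 \<le> n"
      have sq: "(norm (y m - y n))\<^sup>2 < e\<^sup>2"
      proof (cases "m \<le> n")
        case True
        have "(norm (y m - y n))\<^sup>2 \<le> 2 * (\<nu> n - \<nu> m) + 2 / Suc m + 2 / Suc n" by (rule par[OF True])
        also have "\<dots> < 2 * e2 + e2 + e2" using M1 M2 mn by (smt (verit) max.bounded_iff real_norm_def)
        finally have "(norm (y m - y n))\<^sup>2 < 4 * e2" by simp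
        moreover have "4 * e2 < e\<^sup>2" using e unfolding e2_def by simp
        ultimately show ?thesis by linarith
      next
        case False
        have "(norm (y n - y m))\<^sup>2 \<le> 2 * (\<nu> m - \<nu> n) + 2 / Suc n + 2 / Suc m" by (rule par) (use False in auto)
        also have "\<dots> < 2 * e2 + e2 + e2" using M1 M2 mn by (smt (verit) max.bounded_iff real_norm_def)
        finally have "(norm (y m - y n))\<^sup>2 < 4 * e2" by (simp add: norm_minus_commute)
        moreover have "4 * e2 < e\<^sup>2" using e unfolding e2_def by simp
        ultimately show ?thesis by linarith
      qed
      show "norm (y m - y n) < e" using sq e by (smt (verit) norm_ge_zero power_mono)
    qed
    then show "\<exists>M. \<forall>m\<ge>M. \<forall>n\<ge>M. norm (y m - y n) < e" by blast
  qed
  then obtain x where yx: "y \<longlonglongrightarrow> x" using Cauchy_convergent_iff convergent_def by blast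
  have cx: "c \<le> inner x w"
  proof (rule LIMSEQ_le_const)
    show "(\<lambda>n. inner (y n) w) \<longlonglongrightarrow> inner x w" by (intro tendsto_intros yx)
    show "\<exists>N. \<forall>n\<ge>N. c \<le> inner (y n) w" using Hc y by blast
  qed
  have qx: "q x \<le> 0"
  proof (rule field_le_epsilon)
    fix e :: real assume e: "e > 0"
    obtain N0 where N0: "\<forall>N\<ge>N0. \<forall>y\<in>H N. q y \<le> e / 2" using Hq[of "e/2"] e by auto
    have lim0: "(\<lambda>n. 2 * C * (norm (x - y n))\<^sup>2) \<longlonglongrightarrow> 2 * C * (norm (x - x))\<^sup>2"
      by (intro tendsto_intros yx)
    have "q x - e \<le> 2 * C * (norm (x - x))\<^sup>2"
    proof (rule LIMSEQ_le_const[OF lim0], intro exI allI impI)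
      fix n assume "N0 \<le> n"
      then have "q (y n) \<le> e / 2" using N0 y by blast
      moreover have "q x \<le> 2 * q (x - y n) + 2 * q (y n)" using qadd[of "x - y n" "y n"] by simp
      moreover have "q (x - y n) \<le> C * (norm (x - y n))\<^sup>2" by (rule qbound)
      ultimately show "q x - e \<le> 2 * C * (norm (x - y n))\<^sup>2" by linarith
    qed
    then show "q x \<le> 0 + e" by simp
  qed
  then have "x = 0" by (rule qzero)
  then show False using cx c by simp
qed

lemma weak_conv_abstract:
  fixes q :: "'v::{real_inner,complete_space} \<Rightarrow> real" and d :: "nat \<Rightarrow> 'v"
  assumes qconv: "\<And>x y a b. a \<ge> 0 \<Longrightarrow> b \<ge> 0 \<Longrightarrow> a + b = 1 \<Longrightarrow> q (a *\<^sub>R x + b *\<^sub>R y) \<le> a * q x + b * q y"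
  and qadd: "\<And>x y. q (x + y) \<le> 2 * q x + 2 * q y"
  and qbound: "\<And>x. q x \<le> C * (norm x)\<^sup>2"
  and qzero: "\<And>x. q x \<le> 0 \<Longrightarrow> x = 0"
  and bnd: "\<And>n. norm (d n) \<le> B"
  and qlim: "(\<lambda>n. q (d n)) \<longlonglongrightarrow> 0"
  shows "(\<lambda>n. inner (d n) w) \<longlonglongrightarrow> 0"
proof (rule LIMSEQ_I)
  fix r :: real assume r: "r > 0"
  have "eventually (\<lambda>n. inner (d n) w < r) sequentially"
    by (rule weak_key[OF assms r])
  moreover have "eventually (\<lambda>n. inner (d n) (-w) < r) sequentially"
    by (rule weak_key[OF assms r])
  ultimately have "eventually (\<lambda>n. norm (inner (d n) w - 0) < r) sequentially"
    by eventually_elim (auto simp: inner_minus_right)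
  then show "\<exists>no. \<forall>n\<ge>no. norm (inner (d n) w - 0) < r" unfolding eventually_sequentially .
qed


lemma sq_powr: "(a\<^sup>2) powr (p/2) = \<bar>a\<bar> powr p" for a p :: real
proof -
  have "(a\<^sup>2) powr (p/2) = (\<bar>a\<bar> powr 2) powr (p/2)" by simp
  also have "\<dots> = \<bar>a\<bar> powr (2 * (p/2))" by (rule powr_powr)
  also have "\<dots> = \<bar>a\<bar> powr p" by simp
  finally show ?thesis .
qed

lemma powr_subadd:
  fixes x y p :: real assumes "0 \<le> x" "0 \<le> y" "0 < p" "p \<le> 1"
  shows "(x + y) powr p \<le> x powr p + y powr p"
proof (cases "x + y = 0")
  case True then have "x = 0" "y = 0" using assms by auto
  then show ?thesis by simp
next
  case False
  define s where "s = x + y"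
  have s: "s > 0" using False assms by (simp add: s_def)
  have hx: "x / s \<le> (x / s) powr p"
    using powr_mono'[of p 1 "x/s"] assms s by (simp add: s_def)
  have hy: "y / s \<le> (y / s) powr p"
    using powr_mono'[of p 1 "y/s"] assms s by (simp add: s_def)
  have "x powr p = s powr p * (x / s) powr p"
    using s by (simp add: powr_divide)
  moreover have "y powr p = s powr p * (y / s) powr p"
    using s by (simp add: powr_divide)
  ultimately have "x powr p + y powr p \<ge> s powr p * (x / s) + s powr p * (y / s)"
    using hx hy by (smt (verit) mult_left_mono powr_ge_zero)
  also have "s powr p * (x / s) + s powr p * (y / s) = s powr p * ((x + y) / s)"
    by (simp add: add_divide_distrib ring_distribs)
  also have "(x + y) / s = 1" using s by (simp add: s_def)
  finally show ?thesis by (simp add: s_def)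
qed

lemma abs_powr_diff:
  fixes a b p :: real assumes "0 < p" "p \<le> 1"
  shows "\<bar>\<bar>a\<bar> powr p - \<bar>b\<bar> powr p\<bar> \<le> \<bar>a - b\<bar> powr p"
proof -
  have 1: "\<bar>a\<bar> powr p \<le> \<bar>b\<bar> powr p + \<bar>a - b\<bar> powr p"
  proof -
    have "\<bar>a\<bar> powr p \<le> (\<bar>b\<bar> + \<bar>a - b\<bar>) powr p" using assms by (intro powr_mono2) auto
    also have "\<dots> \<le> \<bar>b\<bar> powr p + \<bar>a - b\<bar> powr p" using assms by (intro powr_subadd) auto
    finally show ?thesis .
  qed
  have 2: "\<bar>b\<bar> powr p \<le> \<bar>a\<bar> powr p + \<bar>a - b\<bar> powr p"
  proof -
    have "\<bar>b\<bar> powr p \<le> (\<bar>a\<bar> + \<bar>a - b\<bar>) powr p" using assms by (intro powr_mono2) auto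
    also have "\<dots> \<le> \<bar>a\<bar> powr p + \<bar>a - b\<bar> powr p" using assms by (intro powr_subadd) auto
    finally show ?thesis .
  qed
  from 1 2 show ?thesis by linarith
qed

lemma powr_split_bound:
  fixes t \<delta> p :: real assumes "0 \<le> t" "0 < \<delta>" "0 < p" "p < 1"
  shows "t powr p \<le> \<delta> powr p + \<delta> powr (p - 2) * t\<^sup>2"
proof (cases "t \<le> \<delta>")
  case True
  then have "t powr p \<le> \<delta> powr p" using assms by (intro powr_mono2) auto
  moreover have "0 \<le> \<delta> powr (p - 2) * t\<^sup>2" by simp
  ultimately show ?thesis by linarith
next
  case False
  then have t: "t > 0" using assms by auto
  have "t powr p = t powr (p - 2) * t powr 2" by (simp add: powr_add[symmetric])
  also have "\<dots> = t powr (p - 2) * t\<^sup>2" using t by simp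
  also have "\<dots> \<le> \<delta> powr (p - 2) * t\<^sup>2"
    using powr_mono2'[of "p - 2" \<delta> t] False assms by (intro mult_right_mono) auto
  finally show ?thesis using powr_ge_zero[of \<delta> p] by linarith
qed

lemma psi_pt:
  fixes p e t :: real assumes p: "0 < p" "p < 1" and t: "0 \<le> t" and e: "0 \<le> e"
  shows "0 \<le> psi p e t" "psi p e t \<le> 1 + e powr p + t" "\<bar>psi p e t - psi p 0 t\<bar> \<le> e powr p"
proof -
  have p0: "psi p 0 t = t powr (p/2)" by (simp add: psi_def)
  have tp: "t powr (p/2) \<le> 1 + t"
  proof (cases "t \<le> 1")
    case True then have "t powr (p/2) \<le> 1" using p t by (intro powr_le1) auto
    then show ?thesis using t by linarith
  next
    case False
    then have "t powr (p/2) \<le> t powr 1" using p by (intro powr_mono) auto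
    then show ?thesis using False by simp
  qed
  have "0 \<le> psi p e t \<and> psi p e t \<le> 1 + e powr p + t \<and> \<bar>psi p e t - psi p 0 t\<bar> \<le> e powr p"
  proof (cases "e > 0 \<and> t < e\<^sup>2")
    case True
    then have ep: "e > 0" and te: "t < e\<^sup>2" by auto
    have psiv: "psi p e t = p / 2 * t / e powr (2 - p) + (1 - p / 2) * e powr p"
      using True by (simp add: psi_def)
    have "e\<^sup>2 / e powr (2 - p) = e powr p"
    proof -
      have "e\<^sup>2 = e powr 2" using ep by simp
      then show ?thesis by (simp add: powr_diff[symmetric])
    qed
    moreover have "t / e powr (2 - p) \<le> e\<^sup>2 / e powr (2 - p)"
      using te ep by (intro divide_right_mono) auto
    ultimately have a: "t / e powr (2 - p) \<le> e powr p" by simp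
    have b: "0 \<le> t / e powr (2 - p)" using t by simp
    define A where "A = t / e powr (2 - p)"
    define E where "E = e powr p"
    have psiA: "psi p e t = p / 2 * A + (1 - p / 2) * E" unfolding psiv A_def E_def by simp
    have a': "A \<le> E" and b': "0 \<le> A" using a b unfolding A_def E_def by auto
    have E0: "0 \<le> E" unfolding E_def by simp
    have c1: "p / 2 * A \<le> p / 2 * E" using a' p by (intro mult_left_mono) auto
    have c2: "0 \<le> p / 2 * A" using b' p by simp
    have c3: "0 \<le> (1 - p / 2) * E" using E0 p by simp
    have c4: "p / 2 * E + (1 - p / 2) * E = E" by (simp add: algebra_simps)
    have up: "psi p e t \<le> E" using c1 c4 psiA by linarith
    have lo: "0 \<le> psi p e t" using c2 c3 psiA by linarith
    have "t powr (p/2) \<le> (e\<^sup>2) powr (p/2)" using te t p by (intro powr_mono2) auto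
    also have "(e\<^sup>2) powr (p/2) = e powr p" using sq_powr[of e p] ep by simp
    finally have tE: "t powr (p/2) \<le> E" unfolding E_def .
    have t0: "0 \<le> t powr (p/2)" by simp
    have d1: "psi p e t \<le> 1 + E + t" using up t by linarith
    have d2: "\<bar>psi p e t - t powr (p/2)\<bar> \<le> E" using up lo tE t0 by linarith
    show ?thesis using lo d1 d2 p0 unfolding E_def by simp
  next
    case False
    then have "psi p e t = t powr (p/2)" by (auto simp: psi_def)
    moreover have "t powr (p/2) \<le> 1 + e powr p + t" using tp powr_ge_zero[of e p] by linarith
    ultimately show ?thesis using p0 by simp
  qed
  then show "0 \<le> psi p e t" "psi p e t \<le> 1 + e powr p + t" "\<bar>psi p e t - psi p 0 t\<bar> \<le> e powr p" by auto
qed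


lemma emb_lin: "compact_dense_embedding \<Omega> \<iota> \<Longrightarrow> \<iota> (a *\<^sub>R u + b *\<^sub>R v) x = a * \<iota> u x + b * \<iota> v x"
  by (simp add: compact_dense_embedding_def)

lemma emb_diff: "compact_dense_embedding \<Omega> \<iota> \<Longrightarrow> \<iota> (u - v) x = \<iota> u x - \<iota> v x"
  using emb_lin[of \<Omega> \<iota> 1 u "-1" v x] by simp

lemma emb_add: "compact_dense_embedding \<Omega> \<iota> \<Longrightarrow> \<iota> (u + v) x = \<iota> u x + \<iota> v x"
  using emb_lin[of \<Omega> \<iota> 1 u 1 v x] by simp

lemma emb_meas: "compact_dense_embedding \<Omega> \<iota> \<Longrightarrow> \<iota> u \<in> borel_measurable (lebesgue_on \<Omega>)"
  by (simp add: compact_dense_embedding_def in_L2_def)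

lemma emb_int: "compact_dense_embedding \<Omega> \<iota> \<Longrightarrow> integrable (lebesgue_on \<Omega>) (\<lambda>x. (\<iota> u x)\<^sup>2)"
  by (simp add: compact_dense_embedding_def in_L2_def)

definition qv :: "(real^'n::finite) set \<Rightarrow> ('v \<Rightarrow> (real^'n \<Rightarrow> real)) \<Rightarrow> 'v \<Rightarrow> real" where
  "qv \<Omega> \<iota> u = (\<integral>x. (\<iota> u x)\<^sup>2 \<partial>lebesgue_on \<Omega>)"

lemma qv_nonneg: "0 \<le> qv \<Omega> \<iota> u"
  unfolding qv_def by (intro integral_nonneg_AE) auto

lemma L2_sq: "(L2_norm \<Omega> (\<iota> u))\<^sup>2 = qv \<Omega> \<iota> u"
  using qv_nonneg[of \<Omega> \<iota> u] unfolding L2_norm_def qv_def by simp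

lemma L2_nonneg: "0 \<le> L2_norm \<Omega> (\<iota> u)"
  using qv_nonneg[of \<Omega> \<iota> u] unfolding L2_norm_def qv_def by simp

lemma conv_sq:
  fixes a b s t :: real assumes "0 \<le> a" "0 \<le> b" "a + b = 1"
  shows "(a * s + b * t)\<^sup>2 \<le> a * s\<^sup>2 + b * t\<^sup>2"
proof -
  have b: "b = 1 - a" using assms by simp
  have "a * s\<^sup>2 + b * t\<^sup>2 - (a * s + b * t)\<^sup>2 = a * b * (s - t)\<^sup>2"
    unfolding b by (simp add: power2_eq_square algebra_simps)
  moreover have "0 \<le> a * b * (s - t)\<^sup>2" using assms by simp
  ultimately show ?thesis by linarith
qed

lemma add_sq: "(s + t)\<^sup>2 \<le> 2 * s\<^sup>2 + 2 * (t::real)\<^sup>2"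
proof -
  have "2 * s\<^sup>2 + 2 * t\<^sup>2 - (s + t)\<^sup>2 = (s - t)\<^sup>2" by (simp add: power2_eq_square algebra_simps)
  moreover have "0 \<le> (s - t)\<^sup>2" by simp
  ultimately show ?thesis by linarith
qed

lemma qv_conv:
  assumes emb: "compact_dense_embedding \<Omega> \<iota>" and ab: "0 \<le> a" "0 \<le> b" "a + b = 1"
  shows "qv \<Omega> \<iota> (a *\<^sub>R x + b *\<^sub>R y) \<le> a * qv \<Omega> \<iota> x + b * qv \<Omega> \<iota> y"
proof -
  have "qv \<Omega> \<iota> (a *\<^sub>R x + b *\<^sub>R y) = (\<integral>s. (a * \<iota> x s + b * \<iota> y s)\<^sup>2 \<partial>lebesgue_on \<Omega>)"
    unfolding qv_def using emb_lin[OF emb] by simp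
  also have "\<dots> \<le> (\<integral>s. a * (\<iota> x s)\<^sup>2 + b * (\<iota> y s)\<^sup>2 \<partial>lebesgue_on \<Omega>)"
  proof (rule integral_mono)
    show "integrable (lebesgue_on \<Omega>) (\<lambda>s. (a * \<iota> x s + b * \<iota> y s)\<^sup>2)"
      using emb_int[OF emb, of "a *\<^sub>R x + b *\<^sub>R y"] emb_lin[OF emb] by simp
    show "integrable (lebesgue_on \<Omega>) (\<lambda>s. a * (\<iota> x s)\<^sup>2 + b * (\<iota> y s)\<^sup>2)"
      using emb_int[OF emb] by simp
    show "(a * \<iota> x s + b * \<iota> y s)\<^sup>2 \<le> a * (\<iota> x s)\<^sup>2 + b * (\<iota> y s)\<^sup>2" for s
      by (rule conv_sq[OF ab])
  qed
  also have "\<dots> = a * qv \<Omega> \<iota> x + b * qv \<Omega> \<iota> y"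
    unfolding qv_def using emb_int[OF emb] by simp
  finally show ?thesis .
qed

lemma qv_add:
  assumes emb: "compact_dense_embedding \<Omega> \<iota>"
  shows "qv \<Omega> \<iota> (x + y) \<le> 2 * qv \<Omega> \<iota> x + 2 * qv \<Omega> \<iota> y"
proof -
  have "qv \<Omega> \<iota> (x + y) = (\<integral>s. (\<iota> x s + \<iota> y s)\<^sup>2 \<partial>lebesgue_on \<Omega>)"
    unfolding qv_def using emb_add[OF emb] by simp
  also have "\<dots> \<le> (\<integral>s. 2 * (\<iota> x s)\<^sup>2 + 2 * (\<iota> y s)\<^sup>2 \<partial>lebesgue_on \<Omega>)"
  proof (rule integral_mono)
    show "integrable (lebesgue_on \<Omega>) (\<lambda>s. (\<iota> x s + \<iota> y s)\<^sup>2)"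
      using emb_int[OF emb, of "x + y"] emb_add[OF emb] by simp
    show "integrable (lebesgue_on \<Omega>) (\<lambda>s. 2 * (\<iota> x s)\<^sup>2 + 2 * (\<iota> y s)\<^sup>2)"
      using emb_int[OF emb] by simp
    show "(\<iota> x s + \<iota> y s)\<^sup>2 \<le> 2 * (\<iota> x s)\<^sup>2 + 2 * (\<iota> y s)\<^sup>2" for s
      by (rule add_sq)
  qed
  also have "\<dots> = 2 * qv \<Omega> \<iota> x + 2 * qv \<Omega> \<iota> y"
    unfolding qv_def using emb_int[OF emb] by simp
  finally show ?thesis .
qed

lemma qv_bound:
  assumes emb: "compact_dense_embedding \<Omega> \<iota>"
  obtains C where "\<And>u. qv \<Omega> \<iota> u \<le> C * (norm u)\<^sup>2"
proof -
  have "\<exists>C. \<forall>u. L2_norm \<Omega> (\<iota> u) \<le> C * norm u"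
    by (rule conjunct1[OF conjunct2[OF conjunct2[OF conjunct2[OF emb[unfolded compact_dense_embedding_def]]]]])
  then obtain C where C: "\<And>u. L2_norm \<Omega> (\<iota> u) \<le> C * norm u" by blast
  have "qv \<Omega> \<iota> u \<le> C\<^sup>2 * (norm u)\<^sup>2" for u
  proof -
    have "(L2_norm \<Omega> (\<iota> u))\<^sup>2 \<le> (C * norm u)\<^sup>2"
      using C[of u] L2_nonneg[of \<Omega> \<iota> u] by (intro power_mono) auto
    then show ?thesis unfolding L2_sq by (simp add: power_mult_distrib)
  qed
  then show ?thesis using that by blast
qed

lemma qv_zero:
  assumes emb: "compact_dense_embedding \<Omega> \<iota>" and q: "qv \<Omega> \<iota> x \<le> 0"
  shows "x = 0"
proof -
  have "qv \<Omega> \<iota> x = 0" using q qv_nonneg[of \<Omega> \<iota> x] by linarith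
  then have "AE s in lebesgue_on \<Omega>. (\<iota> x s)\<^sup>2 = 0"
    unfolding qv_def using integral_nonneg_eq_0_iff_AE[OF emb_int[OF emb, of x]] by simp
  then have "AE s in lebesgue_on \<Omega>. \<iota> x s = 0" by (rule AE_mp) auto
  moreover have "\<forall>u. (AE x in lebesgue_on \<Omega>. \<iota> u x = 0) \<longrightarrow> u = 0"
    by (rule conjunct1[OF conjunct2[OF conjunct2[OF emb[unfolded compact_dense_embedding_def]]]])
  ultimately show ?thesis by blast
qed


lemma psi_meas:
  assumes emb: "compact_dense_embedding \<Omega> \<iota>"
  shows "(\<lambda>x. psi p e ((\<iota> u x)\<^sup>2)) \<in> borel_measurable (lebesgue_on \<Omega>)"
proof -
  have [measurable]: "\<iota> u \<in> borel_measurable (lebesgue_on \<Omega>)" by (rule emb_meas[OF emb])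
  show ?thesis unfolding psi_def by measurable
qed

lemma psi_int:
  assumes emb: "compact_dense_embedding \<Omega> \<iota>" and fm: "finite_measure (lebesgue_on \<Omega>)"
    and p: "0 < p" "p < 1" and e: "0 \<le> e"
  shows "integrable (lebesgue_on \<Omega>) (\<lambda>x. psi p e ((\<iota> u x)\<^sup>2))"
proof (rule Bochner_Integration.integrable_bound[where f="\<lambda>x. 1 + e powr p + (\<iota> u x)\<^sup>2"])
  show "integrable (lebesgue_on \<Omega>) (\<lambda>x. 1 + e powr p + (\<iota> u x)\<^sup>2)"
    by (intro Bochner_Integration.integrable_add emb_int[OF emb] finite_measure.integrable_const[OF fm])
  show "(\<lambda>x. psi p e ((\<iota> u x)\<^sup>2)) \<in> borel_measurable (lebesgue_on \<Omega>)" by (rule psi_meas[OF emb])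
  show "AE x in lebesgue_on \<Omega>. norm (psi p e ((\<iota> u x)\<^sup>2)) \<le> norm (1 + e powr p + (\<iota> u x)\<^sup>2)"
  proof (rule AE_I2)
    fix x
    have "0 \<le> psi p e ((\<iota> u x)\<^sup>2)" "psi p e ((\<iota> u x)\<^sup>2) \<le> 1 + e powr p + (\<iota> u x)\<^sup>2"
      using psi_pt[OF p _ e, of "(\<iota> u x)\<^sup>2"] by auto
    moreover have "0 \<le> 1 + e powr p + (\<iota> u x)\<^sup>2" by (simp add: add_nonneg_nonneg)
    ultimately show "norm (psi p e ((\<iota> u x)\<^sup>2)) \<le> norm (1 + e powr p + (\<iota> u x)\<^sup>2)" by simp
  qed
qed

lemma G_diff:
  assumes emb: "compact_dense_embedding \<Omega> \<iota>" and fm: "finite_measure (lebesgue_on \<Omega>)"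
    and p: "0 < p" "p < 1" and e: "0 \<le> e"
  shows "\<bar>G \<Omega> \<iota> p e u - G \<Omega> \<iota> p 0 u\<bar> \<le> e powr p * measure (lebesgue_on \<Omega>) (space (lebesgue_on \<Omega>))"
proof -
  let ?M = "lebesgue_on \<Omega>"
  let ?m = "measure ?M (space ?M)"
  have i1: "integrable ?M (\<lambda>x. psi p e ((\<iota> u x)\<^sup>2))" by (rule psi_int[OF emb fm p e])
  have i0: "integrable ?M (\<lambda>x. psi p 0 ((\<iota> u x)\<^sup>2))" by (rule psi_int[OF emb fm p]) simp
  have ic: "integrable ?M (\<lambda>x. e powr p)" using finite_measure.integrable_const[OF fm] .
  have diff: "G \<Omega> \<iota> p e u - G \<Omega> \<iota> p 0 u = (\<integral>x. psi p e ((\<iota> u x)\<^sup>2) - psi p 0 ((\<iota> u x)\<^sup>2) \<partial>?M)"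
    unfolding G_def using i1 i0 by simp
  have pt: "\<bar>psi p e ((\<iota> u x)\<^sup>2) - psi p 0 ((\<iota> u x)\<^sup>2)\<bar> \<le> e powr p" for x
    using psi_pt(3)[OF p _ e, of "(\<iota> u x)\<^sup>2"] by simp
  have "(\<integral>x. psi p e ((\<iota> u x)\<^sup>2) - psi p 0 ((\<iota> u x)\<^sup>2) \<partial>?M) \<le> (\<integral>x. e powr p \<partial>?M)"
    using i1 i0 ic pt by (intro integral_mono) (auto simp: abs_le_iff)
  moreover have "- (\<integral>x. psi p e ((\<iota> u x)\<^sup>2) - psi p 0 ((\<iota> u x)\<^sup>2) \<partial>?M) = (\<integral>x. psi p 0 ((\<iota> u x)\<^sup>2) - psi p e ((\<iota> u x)\<^sup>2) \<partial>?M)"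
    using i1 i0 by simp
  moreover have "(\<integral>x. psi p 0 ((\<iota> u x)\<^sup>2) - psi p e ((\<iota> u x)\<^sup>2) \<partial>?M) \<le> (\<integral>x. e powr p \<partial>?M)"
    using i1 i0 ic pt by (intro integral_mono) (auto simp: abs_le_iff)
  moreover have "(\<integral>x. e powr p \<partial>?M) = e powr p * ?m" by simp
  ultimately show ?thesis unfolding diff by linarith
qed

lemma G_cont:
  assumes emb: "compact_dense_embedding \<Omega> \<iota>" and fm: "finite_measure (lebesgue_on \<Omega>)"
    and p: "0 < p" "p < 1" and d: "0 < \<delta>"
  shows "\<bar>G \<Omega> \<iota> p 0 u - G \<Omega> \<iota> p 0 v\<bar> \<le> \<delta> powr p * measure (lebesgue_on \<Omega>) (space (lebesgue_on \<Omega>)) + \<delta> powr (p - 2) * qv \<Omega> \<iota> (u - v)"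
proof -
  let ?M = "lebesgue_on \<Omega>"
  let ?m = "measure ?M (space ?M)"
  have iu: "integrable ?M (\<lambda>x. psi p 0 ((\<iota> u x)\<^sup>2))" by (rule psi_int[OF emb fm p]) simp
  have iv: "integrable ?M (\<lambda>x. psi p 0 ((\<iota> v x)\<^sup>2))" by (rule psi_int[OF emb fm p]) simp
  have ib: "integrable ?M (\<lambda>x. \<delta> powr p + \<delta> powr (p - 2) * (\<iota> (u - v) x)\<^sup>2)"
    by (intro Bochner_Integration.integrable_add integrable_mult_right emb_int[OF emb] finite_measure.integrable_const[OF fm])
  have diff: "G \<Omega> \<iota> p 0 u - G \<Omega> \<iota> p 0 v = (\<integral>x. psi p 0 ((\<iota> u x)\<^sup>2) - psi p 0 ((\<iota> v x)\<^sup>2) \<partial>?M)"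
    unfolding G_def using iu iv by simp
  have pt: "\<bar>psi p 0 ((\<iota> u x)\<^sup>2) - psi p 0 ((\<iota> v x)\<^sup>2)\<bar> \<le> \<delta> powr p + \<delta> powr (p - 2) * (\<iota> (u - v) x)\<^sup>2" for x
  proof -
    have "\<bar>psi p 0 ((\<iota> u x)\<^sup>2) - psi p 0 ((\<iota> v x)\<^sup>2)\<bar> = \<bar>\<bar>\<iota> u x\<bar> powr p - \<bar>\<iota> v x\<bar> powr p\<bar>"
      by (simp add: psi_def sq_powr)
    also have "\<dots> \<le> \<bar>\<iota> u x - \<iota> v x\<bar> powr p" using abs_powr_diff p by simp
    also have "\<dots> \<le> \<delta> powr p + \<delta> powr (p - 2) * \<bar>\<iota> u x - \<iota> v x\<bar>\<^sup>2"
      by (rule powr_split_bound) (use d p in auto)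
    finally show ?thesis using emb_diff[OF emb] by simp
  qed
  have "(\<integral>x. psi p 0 ((\<iota> u x)\<^sup>2) - psi p 0 ((\<iota> v x)\<^sup>2) \<partial>?M) \<le> (\<integral>x. \<delta> powr p + \<delta> powr (p - 2) * (\<iota> (u - v) x)\<^sup>2 \<partial>?M)"
    using iu iv ib pt by (intro integral_mono) (auto simp: abs_le_iff)
  moreover have "- (\<integral>x. psi p 0 ((\<iota> u x)\<^sup>2) - psi p 0 ((\<iota> v x)\<^sup>2) \<partial>?M) = (\<integral>x. psi p 0 ((\<iota> v x)\<^sup>2) - psi p 0 ((\<iota> u x)\<^sup>2) \<partial>?M)"
    using iu iv by simp
  moreover have "(\<integral>x. psi p 0 ((\<iota> v x)\<^sup>2) - psi p 0 ((\<iota> u x)\<^sup>2) \<partial>?M) \<le> (\<integral>x. \<delta> powr p + \<delta> powr (p - 2) * (\<iota> (u - v) x)\<^sup>2 \<partial>?M)"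
    using iu iv ib pt by (intro integral_mono) (auto simp: abs_le_iff)
  moreover have "(\<integral>x. \<delta> powr p + \<delta> powr (p - 2) * (\<iota> (u - v) x)\<^sup>2 \<partial>?M) = \<delta> powr p * ?m + \<delta> powr (p - 2) * qv \<Omega> \<iota> (u - v)"
    using emb_int[OF emb, of "u - v"] finite_measure.integrable_const[OF fm, of "\<delta> powr p"] unfolding qv_def by simp
  ultimately show ?thesis unfolding diff by linarith
qed


lemma norm_diff_sq: fixes a b :: "'v::real_inner"
  shows "(norm (a - b))\<^sup>2 = (norm a)\<^sup>2 - (norm b)\<^sup>2 - 2 * inner (a - b) b"
  by (simp add: power2_norm_eq_inner inner_diff_left inner_diff_right inner_commute algebra_simps)

theorem lemma5p1:
  fixes \<Omega> :: "(real^'n::finite) set"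
    and \<iota> :: "'v::{real_inner,complete_space} \<Rightarrow> (real^'n \<Rightarrow> real)"
    and F :: "'v \<Rightarrow> real"
    and \<alpha> \<beta> p \<rho> :: real
    and ubar :: 'v
    and \<epsilon> :: "nat \<Rightarrow> real"
    and u :: "nat \<Rightarrow> 'v"
  assumes dom: "bounded_lipschitz_domain \<Omega>"
    and emb: "compact_dense_embedding \<Omega> \<iota>"
    and F_wlsc: "weakly_lsc F"
    and F_below: "affine_lower_bound F"
    and F_C1: "C1_frechet F"
    and \<alpha>: "\<alpha> > 0" and \<beta>: "\<beta> > 0" and p: "0 < p" "p < 1"
    and \<rho>: "\<rho> > 0"
    and local_sol: "\<forall>v. norm (v - ubar) \<le> \<rho> \<longrightarrow>
                        Phi \<Omega> \<iota> F \<alpha> \<beta> p 0 ubar \<le> Phi \<Omega> \<iota> F \<alpha> \<beta> p 0 v"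
    and eps_pos: "\<forall>k. \<epsilon> k > 0"
    and eps_lim: "\<epsilon> \<longlonglongrightarrow> 0"
    and u_feas: "\<forall>k. norm (u k - ubar) \<le> \<rho>"
    and u_opt: "\<forall>k v. norm (v - ubar) \<le> \<rho> \<longrightarrow>
        Phi \<Omega> \<iota> F \<alpha> \<beta> p (\<epsilon> k) (u k) + 1/2 * (L2_norm \<Omega> (\<lambda>x. \<iota> (u k) x - \<iota> ubar x))\<^sup>2
          \<le> Phi \<Omega> \<iota> F \<alpha> \<beta> p (\<epsilon> k) v + 1/2 * (L2_norm \<Omega> (\<lambda>x. \<iota> v x - \<iota> ubar x))\<^sup>2"
  shows "u \<longlonglongrightarrow> ubar"
proof -
  let ?M = "lebesgue_on \<Omega>"
  define m where "m = measure ?M (space ?M)"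
  have m0: "0 \<le> m" by (simp add: m_def)
  have "open \<Omega>" "bounded \<Omega>" using dom unfolding bounded_lipschitz_domain_def by auto
  then have fm: "finite_measure ?M" by (intro finite_measure_lebesgue_on lmeasurable_open)
  define Phi0 where "Phi0 v = Phi \<Omega> \<iota> F \<alpha> \<beta> p 0 v" for v
  define E where "E k = \<beta> * (\<epsilon> k powr p * m)" for k
  have E0: "0 \<le> E k" for k using \<beta> m0 by (simp add: E_def)
  have PhiE: "\<bar>Phi \<Omega> \<iota> F \<alpha> \<beta> p (\<epsilon> k) v - Phi0 v\<bar> \<le> E k" for k v
  proof -
    have "\<bar>Phi \<Omega> \<iota> F \<alpha> \<beta> p (\<epsilon> k) v - Phi0 v\<bar> = \<beta> * \<bar>G \<Omega> \<iota> p (\<epsilon> k) v - G \<Omega> \<iota> p 0 v\<bar>"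
      unfolding Phi0_def Phi_def using \<beta> by (simp add: abs_mult right_diff_distrib[symmetric])
    also have "\<dots> \<le> \<beta> * (\<epsilon> k powr p * m)"
      using G_diff[OF emb fm p, of "\<epsilon> k" v] eps_pos \<beta> unfolding m_def
      by (intro mult_left_mono) (auto simp: less_imp_le)
    finally show ?thesis by (simp add: E_def)
  qed
  define qk where "qk k = qv \<Omega> \<iota> (u k - ubar)" for k
  have qk0: "0 \<le> qk k" for k by (simp add: qk_def qv_nonneg)
  have qk_eq: "(L2_norm \<Omega> (\<lambda>x. \<iota> (u k) x - \<iota> ubar x))\<^sup>2 = qk k" for k
  proof -
    have "(\<lambda>x. \<iota> (u k) x - \<iota> ubar x) = \<iota> (u k - ubar)" using emb_diff[OF emb] by auto
    then show ?thesis by (simp add: qk_def L2_sq)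
  qed
  have L2z: "L2_norm \<Omega> (\<lambda>x. 0) = 0" by (simp add: L2_norm_def)
  have main: "1/2 * qk k \<le> 2 * E k \<and> Phi0 (u k) \<le> Phi0 ubar + 2 * E k" for k
  proof -
    have "Phi \<Omega> \<iota> F \<alpha> \<beta> p (\<epsilon> k) (u k) + 1/2 * qk k \<le> Phi \<Omega> \<iota> F \<alpha> \<beta> p (\<epsilon> k) ubar"
      using u_opt[rule_format, of ubar k] \<rho> by (simp add: qk_eq L2z less_imp_le)
    moreover have "Phi0 ubar \<le> Phi0 (u k)" using local_sol u_feas unfolding Phi0_def by blast
    moreover note PhiE[of k ubar] PhiE[of k "u k"] qk0[of k]
    ultimately show ?thesis by linarith
  qed
  have pl: "(\<lambda>k. \<epsilon> k powr p) \<longlonglongrightarrow> 0"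
    by (rule tendsto_zero_powrI[OF eps_lim tendsto_const]) (use eps_pos p in \<open>auto intro!: always_eventually less_imp_le\<close>)
  have Elim: "E \<longlonglongrightarrow> 0"
    using tendsto_mult[OF tendsto_const[of \<beta>] tendsto_mult[OF pl tendsto_const[of m]]]
    unfolding E_def by simp
  have qlim: "(\<lambda>k. qv \<Omega> \<iota> (u k - ubar)) \<longlonglongrightarrow> 0"
  proof (rule real_tendsto_sandwich[where f="\<lambda>k. 0" and h="\<lambda>k. 4 * E k"])
    show "eventually (\<lambda>k. 0 \<le> qv \<Omega> \<iota> (u k - ubar)) sequentially" by (simp add: qv_nonneg)
    show "eventually (\<lambda>k. qv \<Omega> \<iota> (u k - ubar) \<le> 4 * E k) sequentially"
    proof (intro always_eventually allI)
      fix k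
      show "qv \<Omega> \<iota> (u k - ubar) \<le> 4 * E k" using main[of k] unfolding qk_def by linarith
    qed
    show "(\<lambda>k. 0::real) \<longlonglongrightarrow> 0" by simp
    show "(\<lambda>k. 4 * E k) \<longlonglongrightarrow> 0" using tendsto_mult[OF tendsto_const[of 4] Elim] by simp
  qed
  obtain C where C: "\<And>x. qv \<Omega> \<iota> x \<le> C * (norm x)\<^sup>2" using qv_bound[OF emb] by blast
  have weak0: "(\<lambda>k. inner (u k - ubar) w) \<longlonglongrightarrow> 0" for w
    by (rule weak_conv_abstract[where q="qv \<Omega> \<iota>" and C=C and B=\<rho> and d="\<lambda>k. u k - ubar"])
       (use qv_conv[OF emb] qv_add[OF emb] C qv_zero[OF emb] u_feas qlim in auto)
  have wc: "weakly_converges u ubar"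
    unfolding weakly_converges_def
  proof
    fix w
    have "(\<lambda>k. inner (u k - ubar) w + inner ubar w) \<longlonglongrightarrow> 0 + inner ubar w"
      by (intro tendsto_add weak0 tendsto_const)
    then show "(\<lambda>k. inner (u k) w) \<longlonglongrightarrow> inner ubar w" by (simp add: inner_diff_left)
  qed
  have Flsc: "ereal (F ubar) \<le> liminf (\<lambda>n. ereal (F (u n)))"
    using F_wlsc wc unfolding weakly_lsc_def by blast
  have Fev: "eventually (\<lambda>k. F ubar - \<eta> < F (u k)) sequentially" if "\<eta> > 0" for \<eta>
  proof -
    have "ereal (F ubar - \<eta>) < ereal (F ubar)" using that by simp
    then have "eventually (\<lambda>k. ereal (F ubar - \<eta>) < ereal (F (u k))) sequentially"
      using Flsc unfolding le_Liminf_iff by blast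
    then show ?thesis by simp
  qed
  have Gev: "eventually (\<lambda>k. \<bar>G \<Omega> \<iota> p 0 (u k) - G \<Omega> \<iota> p 0 ubar\<bar> < \<eta>) sequentially" if \<eta>: "\<eta> > 0" for \<eta>
  proof -
    define \<delta> where "\<delta> = (\<eta> / (2 * (m + 1))) powr (1 / p)"
    have pos: "\<eta> / (2 * (m + 1)) > 0" using \<eta> m0 by simp
    have d0: "\<delta> > 0" unfolding \<delta>_def powr_gt_zero using pos by linarith
    have dp1: "\<delta> powr p = (\<eta> / (2 * (m + 1))) powr (1 / p * p)"
      unfolding \<delta>_def by (rule powr_powr)
    have dp2: "1 / p * p = 1" using p by simp
    have dp: "\<delta> powr p = \<eta> / (2 * (m + 1))"
      unfolding dp1 dp2 by (rule powr_one) (use pos in linarith)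
    have "m / (m + 1) < 1" using m0 by simp
    then have "\<eta> / 2 * (m / (m + 1)) < \<eta> / 2 * 1" using \<eta> by (intro mult_strict_left_mono) auto
    moreover have "\<delta> powr p * m = \<eta> / 2 * (m / (m + 1))" unfolding dp by simp
    ultimately have dm: "\<delta> powr p * m < \<eta> / 2" by simp
    have dq0: "\<delta> powr (p - 2) > 0" using d0 by simp
    have "eventually (\<lambda>k. qv \<Omega> \<iota> (u k - ubar) < \<eta> / (2 * \<delta> powr (p - 2))) sequentially"
      using qlim dq0 \<eta> by (intro order_tendstoD(2)) auto
    then show ?thesis
    proof eventually_elim
      case (elim k)
      have "\<delta> powr (p - 2) * qv \<Omega> \<iota> (u k - ubar) < \<delta> powr (p - 2) * (\<eta> / (2 * \<delta> powr (p - 2)))"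
        using elim dq0 by (intro mult_strict_left_mono) auto
      also have "\<dots> = \<eta> / 2" using dq0 by simp
      finally have "\<delta> powr (p - 2) * qv \<Omega> \<iota> (u k - ubar) < \<eta> / 2" .
      then show ?case using G_cont[OF emb fm p d0, of "u k" ubar] dm unfolding m_def by linarith
    qed
  qed
  show "u \<longlonglongrightarrow> ubar"
    unfolding tendsto_iff
  proof (intro allI impI)
    fix r :: real assume r: "r > 0"
    define K where "K = 2 * (3 + \<beta>) + 2 * \<alpha>"
    have K: "K > 0" using \<alpha> \<beta> by (simp add: K_def)
    define \<eta> where "\<eta> = r\<^sup>2 * \<alpha> / K"
    have \<eta>: "\<eta> > 0" using r \<alpha> K by (simp add: \<eta>_def)
    have K\<eta>: "K * \<eta> = r\<^sup>2 * \<alpha>" using K by (simp add: \<eta>_def)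
    have e1: "eventually (\<lambda>k. F ubar - \<eta> < F (u k)) sequentially" by (rule Fev[OF \<eta>])
    have e2: "eventually (\<lambda>k. \<bar>G \<Omega> \<iota> p 0 (u k) - G \<Omega> \<iota> p 0 ubar\<bar> < \<eta>) sequentially" by (rule Gev[OF \<eta>])
    have e3: "eventually (\<lambda>k. E k < \<eta>) sequentially" using Elim \<eta> by (intro order_tendstoD(2)) auto
    have e4: "eventually (\<lambda>k. dist (inner (u k - ubar) ubar) 0 < \<eta>) sequentially"
      using weak0[of ubar] \<eta> unfolding tendsto_iff by blast
    from e1 e2 e3 e4 show "eventually (\<lambda>k. dist (u k) ubar < r) sequentially"
    proof eventually_elim
      case (elim k)
      define X where "X = (norm (u k))\<^sup>2 - (norm ubar)\<^sup>2"
      define I where "I = inner (u k - ubar) ubar"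
      have I: "\<bar>I\<bar> < \<eta>" using elim(4) by (simp add: I_def dist_real_def)
      have "Phi0 (u k) \<le> Phi0 ubar + 2 * E k" using main by blast
      then have A: "F (u k) + \<alpha> / 2 * (norm (u k))\<^sup>2 + \<beta> * G \<Omega> \<iota> p 0 (u k)
          \<le> F ubar + \<alpha> / 2 * (norm ubar)\<^sup>2 + \<beta> * G \<Omega> \<iota> p 0 ubar + 2 * E k"
        unfolding Phi0_def Phi_def .
      have "\<beta> * (G \<Omega> \<iota> p 0 ubar - G \<Omega> \<iota> p 0 (u k)) \<le> \<beta> * \<eta>"
        using elim(2) \<beta> by (intro mult_left_mono) auto
      then have B: "\<beta> * G \<Omega> \<iota> p 0 ubar - \<beta> * G \<Omega> \<iota> p 0 (u k) \<le> \<beta> * \<eta>" by (simp add: right_diff_distrib)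
      have C1: "\<alpha> / 2 * X < (3 + \<beta>) * \<eta>"
        using A B elim(1) elim(3) unfolding X_def by (simp add: algebra_simps)
      then have C2: "\<alpha> * X < 2 * (3 + \<beta>) * \<eta>" by (simp add: algebra_simps)
      have Y: "(norm (u k - ubar))\<^sup>2 = X - 2 * I" unfolding X_def I_def by (rule norm_diff_sq)
      have I2: "\<alpha> * (- I) \<le> \<alpha> * \<eta>" using I \<alpha> by (intro mult_left_mono) auto
      have q1: "\<alpha> * (X - 2 * I) = \<alpha> * X + 2 * (\<alpha> * (- I))" by (simp add: algebra_simps)
      have q2: "K * \<eta> = 2 * (3 + \<beta>) * \<eta> + 2 * (\<alpha> * \<eta>)" by (simp add: K_def algebra_simps)
      have "\<alpha> * ((norm (u k - ubar))\<^sup>2) < K * \<eta>"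
        unfolding Y using q1 q2 C2 I2 by linarith
      then have "\<alpha> * ((norm (u k - ubar))\<^sup>2) < \<alpha> * r\<^sup>2" using K\<eta> by (simp add: mult.commute)
      then have "(norm (u k - ubar))\<^sup>2 < r\<^sup>2" using \<alpha> by simp
      then have "norm (u k - ubar) < r" using r by (smt (verit) norm_ge_zero power_mono)
      then show ?case by (simp add: dist_norm)
    qed
  qed
qed


end
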